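(* Let $(V,\operatorname{val}_V)$ be a valued vector space of finite dimension $r$ over a valued field $(k,\nu)$ with value group $\mathbb{Z}$, such that $\nu\colon k\setminus\{0\}\to\mathbb{Z}$ is surjective, and fix $x\in k$ with $\nu(x)=1$. Suppose there exists a discriminant function $\operatorname{Disc}\colon\mathbb{B}_V\to\mathbb{Z}$ (with respect to this $x$). Consider the following procedure, applied to a $k$-basis $B_1,\dots,B_r$ of $V$: for $d=1,\dots,r$ in turn, first replace $B_d$ by $x^{-\operatorname{val}_V(B_d)}B_d$; then, as long as there exist $\alpha_1,\dots,\alpha_{d-1}\in k$ with $\operatorname{val}_V(\alpha_1B_1+\cdots+\alpha_{d-1}B_{d-1}+B_d)>0$, choose such $\alpha_1,\dots,\alpha_{d-1}$ and replace $B_d$ by $x^{-1}(\alpha_1B_1+\cdots+\alpha_{d-1}B_{d-1}+B_d)$. Finally return $B_1,\dots,B_r$. Then this procedure terminates.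
   Context: A valuation $\nu$ on $k$ and a value function $\operatorname{val}_V$ on $V$ are as usual: $\nu(a)=\infty\iff a=0$, $\nu(ab)=\nu(a)+\nu(b)$, $\nu(a+b)\ge\min(\nu(a),\nu(b))$; $\operatorname{val}_V(v)=\infty\iff v=0$, $\operatorname{val}_V(av)=\nu(a)+\operatorname{val}_V(v)$, $\operatorname{val}_V(v+w)\ge\min(\operatorname{val}_V(v),\operatorname{val}_V(w))$. An element $v$ is integral if $\operatorname{val}_V(v)\ge0$. $\mathbb{B}_V$ denotes the set of all (ordered) $k$-bases of $V$. A map $\operatorname{Disc}\colon\mathbb{B}_V\to\mathbb{Z}$ is a discriminant function on $V$ if for every basis $B_1,\dots,B_r$ of $V$: (i) $\gamma:=\operatorname{Disc}(\{B_1,\dots,B_r\})\ge0$ whenever all $B_i$ are integral; (ii) whenever there are $d\le r$ and $\alpha_1,\dots,\alpha_{d-1}\in k$ such that $\tilde B_d:=\alpha_1B_1+\cdots+\alpha_{d-1}B_{d-1}+B_d$ satisfies $\operatorname{val}_V(\tilde B_d)>\min_{i=1}^d\operatorname{val}_V(B_i)$, then $\operatorname{Disc}(\{B_1,\dots,B_{d-1},x^{-1}\tilde B_d,B_{d+1},\dots,B_r\})<\gamma$. *)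

theory Defs
  imports Complex_Main
begin

text \<open>A discrete valuation on k, with values in int on nonzero elements
  (the value at 0 is conventionally infinity and is never used).\<close>
definition valuation :: "('k::field \<Rightarrow> int) \<Rightarrow> bool" where
  "valuation \<nu> \<longleftrightarrow>
     (\<forall>a b. a \<noteq> 0 \<longrightarrow> b \<noteq> 0 \<longrightarrow> \<nu> (a * b) = \<nu> a + \<nu> b) \<and>
     (\<forall>a b. a \<noteq> 0 \<longrightarrow> b \<noteq> 0 \<longrightarrow> a + b \<noteq> 0 \<longrightarrow> \<nu> (a + b) \<ge> min (\<nu> a) (\<nu> b))"

text \<open>A value function on V (values on nonzero vectors; val 0 = infinity).\<close>
definition value_function ::
  "('k::field \<Rightarrow> 'v::ab_group_add \<Rightarrow> 'v) \<Rightarrow> ('k \<Rightarrow> int) \<Rightarrow> ('v \<Rightarrow> int) \<Rightarrow> bool" where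
  "value_function scale \<nu> valV \<longleftrightarrow>
     (\<forall>a v. a \<noteq> 0 \<longrightarrow> v \<noteq> 0 \<longrightarrow> valV (scale a v) = \<nu> a + valV v) \<and>
     (\<forall>v w. v \<noteq> 0 \<longrightarrow> w \<noteq> 0 \<longrightarrow> v + w \<noteq> 0 \<longrightarrow> valV (v + w) \<ge> min (valV v) (valV w))"

definition ordered_basis :: "('k::field \<Rightarrow> 'v::ab_group_add \<Rightarrow> 'v) \<Rightarrow> nat \<Rightarrow> 'v list \<Rightarrow> bool" where
  "ordered_basis scale r B \<longleftrightarrow> length B = r \<and> distinct B \<and>
     \<not> module.dependent scale (set B) \<and> module.span scale (set B) = UNIV"

text \<open>The vector alpha_1 B_1 + ... + alpha_{d-1} B_{d-1} + B_d (d is 1-based, lists 0-based).\<close>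
definition comb :: "('k::field \<Rightarrow> 'v::ab_group_add \<Rightarrow> 'v) \<Rightarrow> 'v list \<Rightarrow> nat \<Rightarrow> (nat \<Rightarrow> 'k) \<Rightarrow> 'v" where
  "comb scale B d \<alpha> = (\<Sum>i<d - 1. scale (\<alpha> i) (B ! i)) + B ! (d - 1)"

definition discriminant_function ::
  "('k::field \<Rightarrow> 'v::ab_group_add \<Rightarrow> 'v) \<Rightarrow> ('v \<Rightarrow> int) \<Rightarrow> nat \<Rightarrow> 'k \<Rightarrow> ('v list \<Rightarrow> int) \<Rightarrow> bool" where
  "discriminant_function scale valV r x Disc \<longleftrightarrow>
     (\<forall>B. ordered_basis scale r B \<longrightarrow> (\<forall>i<r. valV (B ! i) \<ge> 0) \<longrightarrow> Disc B \<ge> 0) \<and>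
     (\<forall>B d \<alpha>. ordered_basis scale r B \<longrightarrow> 1 \<le> d \<longrightarrow> d \<le> r \<longrightarrow>
        (comb scale B d \<alpha> = 0 \<or> valV (comb scale B d \<alpha>) > Min ((\<lambda>i. valV (B ! i)) ` {..<d})) \<longrightarrow>
        Disc (B[d - 1 := scale (inverse x) (comb scale B d \<alpha>)]) < Disc B)"

text \<open>"val_V(w) > 0" with the convention val_V(0) = infinity.\<close>
definition improvable :: "('k::field \<Rightarrow> 'v::ab_group_add \<Rightarrow> 'v) \<Rightarrow> ('v \<Rightarrow> int) \<Rightarrow> 'v list \<Rightarrow> nat \<Rightarrow> (nat \<Rightarrow> 'k) \<Rightarrow> bool" where
  "improvable scale valV B d \<alpha> \<longleftrightarrow> comb scale B d \<alpha> = 0 \<or> valV (comb scale B d \<alpha>) > 0"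

text \<open>A state (d, B) with d \<ge> 1 means:
  currently in the inner loop for (1-based) index d; state (0, B) is the start. States with no successor are final.\<close>
definition proc_step :: "('k::field \<Rightarrow> 'v::ab_group_add \<Rightarrow> 'v) \<Rightarrow> ('v \<Rightarrow> int) \<Rightarrow> nat \<Rightarrow> 'k \<Rightarrow>
    nat \<times> 'v list \<Rightarrow> nat \<times> 'v list \<Rightarrow> bool" where
  "proc_step scale valV r x s s' \<longleftrightarrow> (case s of (d, B) \<Rightarrow>
     (1 \<le> d \<and> (\<exists>\<alpha>. improvable scale valV B d \<alpha> \<and>
                    s' = (d, B[d - 1 := scale (inverse x) (comb scale B d \<alpha>)]))) \<or>
     (d < r \<and> (d = 0 \<or> \<not> (\<exists>\<alpha>. improvable scale valV B d \<alpha>)) \<and>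
        s' = (d + 1, B[d := scale (x powi (- valV (B ! d))) (B ! d)])))"

end

theory Submission
  imports Defs
begin

context vector_space begin

lemma ob_nz: "ordered_basis scale r B \<Longrightarrow> i < r \<Longrightarrow> B ! i \<noteq> 0"
  unfolding ordered_basis_def by (metis dependent_zero nth_mem)

lemma ob_notin_span:
  assumes "ordered_basis scale r B" "i < r"
  shows "B ! i \<notin> span (set B - {B ! i})"
proof -
  have ind: "independent (set B)" and "distinct B" "length B = r"
    using assms unfolding ordered_basis_def by auto
  have "set B = insert (B!i) (set B - {B!i})" using assms \<open>length B = r\<close> by auto
  with ind have "independent (insert (B!i) (set B - {B!i}))" by simp
  then show ?thesis unfolding independent_insert by simp
qed

lemma ob_exch:
  assumes ob: "ordered_basis scale r B" and i: "i < r" and c: "c \<noteq> 0"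
    and w: "w - scale c (B!i) \<in> span (set B - {B!i})"
  shows "ordered_basis scale r (B[i := w])"
proof -
  define S0 where "S0 = set B - {B!i}"
  have ind: "independent (set B)" and dist: "distinct B" and len: "length B = r"
    and sp: "span (set B) = UNIV"
    using ob unfolding ordered_basis_def by auto
  have nsp: "B!i \<notin> span S0" using ob_notin_span[OF ob i] S0_def by simp
  have wnot: "w \<notin> span S0"
  proof
    assume "w \<in> span S0"
    then have "w - (w - scale c (B!i)) \<in> span S0" using w S0_def span_diff by blast
    then have "scale c (B!i) \<in> span S0" by simp
    then have "scale (inverse c) (scale c (B!i)) \<in> span S0" by (rule span_scale)
    moreover have "scale (inverse c) (scale c (B!i)) = B!i" using c by simp
    ultimately show False using nsp by simp
  qed
  then have "w \<notin> S0" using span_base by blast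
  have iS0: "independent S0" using ind independent_mono S0_def by blast
  have ind': "independent (insert w S0)" using independent_insertI[OF wnot iS0] .
  have set': "set (B[i := w]) = insert w S0" using set_update_distinct[OF dist] len i S0_def by simp
  have dist': "distinct (B[i := w])" using distinct_list_update[OF dist] \<open>w \<notin> S0\<close> S0_def by blast
  have w1: "w \<in> span (insert w S0)" by (rule span_base) simp
  have "span S0 \<subseteq> span (insert w S0)" by (rule span_mono) blast
  then have w2: "w - scale c (B!i) \<in> span (insert w S0)" using w S0_def by blast
  have "w - (w - scale c (B!i)) \<in> span (insert w S0)" using span_diff[OF w1 w2] .
  then have "scale c (B!i) \<in> span (insert w S0)" by simp
  then have "scale (inverse c) (scale c (B!i)) \<in> span (insert w S0)" by (rule span_scale)
  moreover have "scale (inverse c) (scale c (B!i)) = B!i" using c by simp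
  ultimately have "B!i \<in> span (insert w S0)" by simp
  moreover have "S0 \<subseteq> span (insert w S0)" using span_base by blast
  ultimately have "set B \<subseteq> span (insert w S0)"
    using S0_def by blast
  then have "span (set B) \<subseteq> span (insert w S0)"
    using span_minimal subspace_span by blast
  then have "span (insert w S0) = UNIV" using sp by auto
  then show ?thesis unfolding ordered_basis_def using set' dist' ind' len by simp
qed

lemma ob_scale:
  assumes ob: "ordered_basis scale r B" and i: "i < r" and c: "c \<noteq> 0"
  shows "ordered_basis scale r (B[i := scale c (B!i)])"
  using ob_exch[OF ob i c] span_zero by simp

lemma comb_minus:
  assumes ob: "ordered_basis scale r B" and d: "1 \<le> d" "d \<le> r"
  shows "scale c (comb scale B d \<alpha>) - scale c (B!(d-1)) \<in> span (set B - {B!(d-1)})"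
proof -
  have dist: "distinct B" and len: "length B = r" using ob unfolding ordered_basis_def by auto
  have "scale c (comb scale B d \<alpha>) - scale c (B!(d-1)) = (\<Sum>j<d-1. scale (c * \<alpha> j) (B!j))"
    unfolding comb_def by (simp add: scale_right_distrib scale_sum_right)
  also have "\<dots> \<in> span (set B - {B!(d-1)})"
  proof (rule span_sum)
    fix j assume "j \<in> {..<d-1}"
    then have "j < d - 1" by simp
    then have "B!j \<in> set B - {B!(d-1)}" using dist len d
      by (simp add: nth_eq_iff_index_eq)
    then show "scale (c * \<alpha> j) (B!j) \<in> span (set B - {B!(d-1)})"
      using span_base span_scale by blast
  qed
  finally show ?thesis .
qed

lemma comb_nz:
  assumes ob: "ordered_basis scale r B" and d: "1 \<le> d" "d \<le> r"
  shows "comb scale B d \<alpha> \<noteq> 0"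
proof
  assume "comb scale B d \<alpha> = 0"
  with comb_minus[OF ob d, of 1 \<alpha>] have "- B!(d-1) \<in> span (set B - {B!(d-1)})" by simp
  then have "- (- B!(d-1)) \<in> span (set B - {B!(d-1)})" by (rule span_neg)
  then have "B!(d-1) \<in> span (set B - {B!(d-1)})" by simp
  with ob_notin_span[OF ob] d show False by simp
qed

end

lemma nu_one: "valuation \<nu> \<Longrightarrow> \<nu> (1::'k::field) = 0"
  unfolding valuation_def by (metis add_cancel_left_left mult_1 one_neq_zero)

lemma nu_pow: "valuation \<nu> \<Longrightarrow> (x::'k::field) \<noteq> 0 \<Longrightarrow> \<nu> x = 1 \<Longrightarrow> \<nu> (x ^ n) = int n"
proof (induction n)
  case 0 then show ?case using nu_one by simp
next
  case (Suc n)
  then have "\<nu> (x * x ^ n) = \<nu> x + \<nu> (x ^ n)" unfolding valuation_def by simp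
  then show ?case using Suc by simp
qed

lemma nu_powi:
  assumes v: "valuation \<nu>" and x: "(x::'k::field) \<noteq> 0" and n1: "\<nu> x = 1"
  shows "\<nu> (x powi n) = n"
proof (cases "n \<ge> 0")
  case True then show ?thesis using nu_pow[OF v x n1, of "nat n"] by (simp add: power_int_def)
next
  case False
  let ?m = "nat (-n)"
  have "x ^ ?m * inverse x ^ ?m = 1" using x by (metis power_mult_distrib right_inverse power_one)
  moreover have "\<nu> (x ^ ?m * inverse x ^ ?m) = \<nu> (x ^ ?m) + \<nu> (inverse x ^ ?m)"
    using v x unfolding valuation_def by simp
  ultimately have "\<nu> (inverse x ^ ?m) = - int ?m" using nu_one[OF v] nu_pow[OF v x n1] by simp
  then show ?thesis using False by (simp add: power_int_def)
qed

locale procsetup = vector_space scale for scale :: "'k::field \<Rightarrow> 'v::ab_group_add \<Rightarrow> 'v" +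
  fixes \<nu> :: "'k \<Rightarrow> int" and valV :: "'v \<Rightarrow> int" and x :: 'k and r :: nat and Disc :: "'v list \<Rightarrow> int"
  assumes val: "valuation \<nu>" and xnz: "x \<noteq> 0" and nux: "\<nu> x = 1"
    and vf: "value_function scale \<nu> valV" and disc: "discriminant_function scale valV r x Disc"
begin

definition N :: "'v list \<Rightarrow> nat \<Rightarrow> 'v list" where
  "N B d = map (\<lambda>i. if i < d then B!i else scale (x powi (- valV (B!i))) (B!i)) [0..<length B]"

lemma valscale: "a \<noteq> 0 \<Longrightarrow> v \<noteq> 0 \<Longrightarrow> valV (scale a v) = \<nu> a + valV v"
  using vf unfolding value_function_def by blast

lemma N_ob:
  assumes ob: "ordered_basis scale r B" and d: "d \<le> r"
  shows "ordered_basis scale r (N B d)"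
proof -
  have len: "length B = r" using ob unfolding ordered_basis_def by simp
  define f where "f i = scale (x powi (- valV (B!i))) (B!i)" for i
  define L where "L k = map (\<lambda>i. if i < d \<or> i < k then B!i else f i) [0..<r]" for k
  have "m \<le> r - d \<Longrightarrow> ordered_basis scale r (L (r - m))" for m
  proof (induction m)
    case 0
    have "L r = B" unfolding L_def using len by (intro nth_equalityI) auto
    then show ?case using ob by simp
  next
    case (Suc m)
    define k where "k = r - Suc m"
    have k: "k < r" "d \<le> k" "Suc k = r - m" using Suc.prems unfolding k_def by auto
    have "L k = (L (Suc k))[k := scale (x powi (- valV (B!k))) (L (Suc k) ! k)]"
      unfolding L_def f_def using k by (intro nth_equalityI) (auto simp: nth_list_update)
    moreover have "ordered_basis scale r (L (Suc k))" using Suc k by simp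
    ultimately have "ordered_basis scale r (L k)" using ob_scale k xnz by simp
    then show ?case unfolding k_def .
  qed
  from this[of "r - d"] have "ordered_basis scale r (L d)" using d by simp
  moreover have "L d = N B d" unfolding L_def N_def f_def using len by (intro nth_equalityI) auto
  ultimately show ?thesis by simp
qed

lemma N_nth: "i < length B \<Longrightarrow> N B d ! i = (if i < d then B!i else scale (x powi (- valV (B!i))) (B!i))"
  unfolding N_def by simp

lemma N_len: "length (N B d) = length B" unfolding N_def by simp

lemma N_comb: "1 \<le> d \<Longrightarrow> d \<le> length B \<Longrightarrow> comb scale (N B d) d \<alpha> = comb scale B d \<alpha>"
  unfolding comb_def by (auto simp: N_nth intro!: sum.cong arg_cong2[where f="(+)"])

lemma N_upd: "1 \<le> d \<Longrightarrow> d \<le> length B \<Longrightarrow> N (B[d-1 := w]) d = (N B d)[d-1 := w]"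
  by (intro nth_equalityI) (auto simp: N_nth N_len nth_list_update)

definition Inv :: "nat \<times> 'v list \<Rightarrow> bool" where
  "Inv s \<longleftrightarrow> (case s of (d, B) \<Rightarrow> ordered_basis scale r B \<and> d \<le> r \<and>
     (1 \<le> d \<longrightarrow> valV (B!0) \<le> 0) \<and> (\<forall>i<d. 0 \<le> valV (B!i)))"

lemma Inv_Disc:
  assumes "Inv (d, B)" shows "0 \<le> Disc (N B d)"
proof -
  have ob: "ordered_basis scale r B" and d: "d \<le> r" and pos: "\<forall>i<d. 0 \<le> valV (B!i)"
    using assms Inv_def by auto
  have len: "length B = r" using ob unfolding ordered_basis_def by simp
  have "\<forall>i<r. 0 \<le> valV (N B d ! i)"
  proof (intro allI impI)
    fix i assume i: "i < r"
    show "0 \<le> valV (N B d ! i)"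
    proof (cases "i < d")
      case True then show ?thesis using pos len i by (simp add: N_nth)
    next
      case False
      have "x powi (- valV (B!i)) \<noteq> 0" using xnz by simp
      then have "valV (N B d ! i) = \<nu> (x powi (- valV (B!i))) + valV (B!i)"
        using False len i valscale ob_nz[OF ob i] by (simp add: N_nth)
      then show ?thesis using nu_powi[OF val xnz nux] by simp
    qed
  qed
  then show ?thesis using disc N_ob[OF ob d] unfolding discriminant_function_def by blast
qed

lemma step:
  assumes I: "Inv (d, B)" and st: "proc_step scale valV r x (d, B) (d', B')"
  shows "Inv (d', B') \<and> (d < d' \<or> (d' = d \<and> Disc (N B' d') < Disc (N B d)))"
proof -
  have ob: "ordered_basis scale r B" and d: "d \<le> r" and b0: "1 \<le> d \<longrightarrow> valV (B!0) \<le> 0"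
    and pos: "\<forall>i<d. 0 \<le> valV (B!i)"
    using I Inv_def by auto
  have len: "length B = r" using ob unfolding ordered_basis_def by simp
  from st consider (imp) \<alpha> where "1 \<le> d" "improvable scale valV B d \<alpha>"
      "d' = d" "B' = B[d - 1 := scale (inverse x) (comb scale B d \<alpha>)]"
    | (mv) "d < r" "d' = d + 1" "B' = B[d := scale (x powi (- valV (B ! d))) (B ! d)]"
    unfolding proc_step_def by auto
  then show ?thesis
  proof cases
    case imp
    let ?c = "comb scale B d \<alpha>"
    have cnz: "?c \<noteq> 0" using comb_nz[OF ob imp(1) d] .
    then have cpos: "valV ?c > 0" using imp(2) unfolding improvable_def by simp
    have "d \<noteq> 1"
    proof
      assume "d = 1"
      then have "?c = B!0" unfolding comb_def by simp
      then show False using cpos b0 \<open>d = 1\<close> by simp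
    qed
    then have d2: "2 \<le> d" using imp(1) by simp
    have obB': "ordered_basis scale r B'"
      using imp(4) ob_exch[OF ob _ _ comb_minus[OF ob imp(1) d]] imp(1) d xnz by simp
    have ix: "inverse x \<noteq> 0" using xnz by simp
    have "\<nu> (x * inverse x) = \<nu> x + \<nu> (inverse x)" using val xnz ix unfolding valuation_def by blast
    then have nui: "\<nu> (inverse x) = -1" using nux xnz nu_one[OF val] by simp
    have "valV (scale (inverse x) ?c) = \<nu> (inverse x) + valV ?c" using valscale ix cnz by blast
    then have newpos: "0 \<le> valV (scale (inverse x) ?c)" using nui cpos by simp
    have I': "Inv (d', B')"
      unfolding Inv_def using obB' d imp d2 b0 pos newpos len
      by (auto simp: nth_list_update)
    let ?C = "N B d"
    have obC: "ordered_basis scale r ?C" using N_ob[OF ob d] .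
    have cC: "comb scale ?C d \<alpha> = ?c" using N_comb imp(1) d len by simp
    have "Min ((\<lambda>i. valV (?C ! i)) ` {..<d}) \<le> valV (?C ! 0)"
      using imp(1) by (intro Min_le) auto
    also have "?C ! 0 = B ! 0" using imp(1) d len by (simp add: N_nth)
    finally have "Min ((\<lambda>i. valV (?C ! i)) ` {..<d}) < valV (comb scale ?C d \<alpha>)"
      using b0 imp(1) cpos cC by simp
    then have "Disc (?C[d - 1 := scale (inverse x) (comb scale ?C d \<alpha>)]) < Disc ?C"
      using disc obC imp(1) d unfolding discriminant_function_def by blast
    moreover have "?C[d - 1 := scale (inverse x) (comb scale ?C d \<alpha>)] = N B' d"
      using N_upd imp cC d len by simp
    ultimately show ?thesis using I' imp by simp
  next
    case mv
    let ?a = "x powi (- valV (B ! d))"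
    have anz: "?a \<noteq> 0" using xnz by simp
    have obB': "ordered_basis scale r B'" using mv ob_scale[OF ob mv(1) anz] by simp
    have "valV (scale ?a (B!d)) = \<nu> ?a + valV (B!d)" using valscale anz ob_nz[OF ob mv(1)] by blast
    then have v0: "valV (scale ?a (B!d)) = 0" using nu_powi[OF val xnz nux] by simp
    have "Inv (d', B')"
      unfolding Inv_def using obB' mv b0 pos v0 len
      by (auto simp: nth_list_update less_Suc_eq)
    then show ?thesis using mv by simp
  qed
qed

lemma no_inf:
  assumes "Inv (0, B)"
  shows "\<not> (\<exists>s. s 0 = (0, B) \<and> (\<forall>n. proc_step scale valV r x (s n) (s (Suc n))))"
proof
  assume "\<exists>s. s 0 = (0, B) \<and> (\<forall>n. proc_step scale valV r x (s n) (s (Suc n)))"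
  then obtain s where s0: "s 0 = (0, B)" and ss: "\<And>n. proc_step scale valV r x (s n) (s (Suc n))" by blast
  have inv: "Inv (s n)" for n
  proof (induction n)
    case 0 then show ?case using assms s0 by simp
  next
    case (Suc n) then show ?case using step ss by (metis prod.collapse)
  qed
  define g where "g n = (r - fst (s n), nat (Disc (N (snd (s n)) (fst (s n)))))" for n
  have "(g (Suc n), g n) \<in> less_than <*lex*> less_than" for n
  proof -
    obtain d B where e: "s n = (d, B)" by fastforce
    obtain d' B' where e': "s (Suc n) = (d', B')" by fastforce
    have st: "Inv (d', B') \<and> (d < d' \<or> (d' = d \<and> Disc (N B' d') < Disc (N B d)))"
      using step[of d B d' B'] inv[of n] ss[of n] e e' by simp
    have "d' \<le> r" using st Inv_def by simp
    moreover have "0 \<le> Disc (N B' d')" using Inv_Disc st by blast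
    ultimately show ?thesis unfolding g_def using st e e' by auto
  qed
  then show False using wf_no_infinite_down_chainE[of "less_than <*lex*> less_than" g] by blast
qed

end


theorem mainTheorem4:
  fixes scale :: "'k::field \<Rightarrow> 'v::ab_group_add \<Rightarrow> 'v"
    and \<nu> :: "'k \<Rightarrow> int" and valV :: "'v \<Rightarrow> int"
    and x :: 'k and r :: nat and Disc :: "'v list \<Rightarrow> int" and B :: "'v list"
  assumes "vector_space scale"
    and "\<exists>S. finite S \<and> module.span scale S = UNIV"
    and "vector_space.dim scale (UNIV :: 'v set) = r"
    and "valuation \<nu>"
    and "\<forall>n. \<exists>a. a \<noteq> 0 \<and> \<nu> a = n"
    and "x \<noteq> 0" and "\<nu> x = 1"
    and "value_function scale \<nu> valV"
    and "discriminant_function scale valV r x Disc"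
    and "ordered_basis scale r B"
  shows "\<not> (\<exists>s. s 0 = (0, B) \<and> (\<forall>n. proc_step scale valV r x (s n) (s (Suc n))))"
proof -
  interpret p: procsetup scale \<nu> valV x r Disc
    using assms unfolding procsetup_def procsetup_axioms_def by blast
  have "p.Inv (0, B)" unfolding p.Inv_def using assms(10) by simp
  then show ?thesis by (rule p.no_inf)
qed

end
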